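(* Let $\varphi\colon\mathbb{R}_+\to\mathbb{R}_+$ be a continuous, sublinear and increasing function. Let $\ell\ge1$ be an integer, $(X,\mu)$ a probability space, and $f_1,\dots,f_\ell\colon X\to\mathbb{N}$ measurable maps with $\int_X\varphi(f_i(x))\,d\mu(x)<+\infty$ for every $i\in\{1,\dots,\ell\}$. Then there exists a subadditive map $\psi\colon\mathbb{R}_+\to\mathbb{R}_+$ with $\psi(0)=0$ such that $\psi$ and $t\mapsto t/\psi(t)$ are non-decreasing, and (1) $\varphi(x_k)=o(\psi(x_k))$ as $k\to\infty$ for some increasing sequence $(x_k)_{k\ge0}$ of non-negative real numbers tending to $+\infty$; (2) $\int_X\psi(f_i(x))\,d\mu(x)<+\infty$ for every $i\in\{1,\dots,\ell\}$.
   Context: A function $\varphi$ is sublinear if $\varphi(t)=o(t)$ as $t\to+\infty$. *)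

theory Defs
  imports "HOL-Probability.Probability" "HOL-Library.Landau_Symbols"
begin

definition sublinear :: "(real \<Rightarrow> real) \<Rightarrow> bool" where
  "sublinear \<phi> \<longleftrightarrow> \<phi> \<in> o[at_top](\<lambda>t. t)"

end

theory Submission
  imports Defs
begin

lemma tail_small:
  fixes \<phi> :: "real \<Rightarrow> real" and f :: "nat \<Rightarrow> 'a \<Rightarrow> nat"
  assumes f_meas: "\<And>i. i \<in> {1..l} \<Longrightarrow> f i \<in> measurable M (count_space UNIV)"
    and f_int: "\<And>i. i \<in> {1..l} \<Longrightarrow> (\<integral>\<^sup>+ x. ennreal (\<phi> (real (f i x))) \<partial>M) < \<infinity>"
    and e: "e > 0"
  shows "\<exists>N::nat. (\<integral>\<^sup>+ x. (\<Sum>i\<in>{1..l}. (if N \<le> f i x then ennreal (\<phi> (real (f i x))) else 0)) \<partial>M) < ennreal e"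
proof -
  define u where "u = (\<lambda>(N::nat) x. (\<Sum>i\<in>{1..l}. (if N \<le> f i x then ennreal (\<phi> (real (f i x))) else 0)))"
  have fm: "(\<lambda>x. g (f i x)) \<in> borel_measurable M" if "i \<in> {1..l}" for i and g :: "nat \<Rightarrow> ennreal"
    by (rule measurable_compose[OF f_meas[OF that]]) simp
  have um: "u N \<in> borel_measurable M" for N
    unfolding u_def by (intro borel_measurable_sum fm[where g = "\<lambda>n. if N \<le> n then ennreal (\<phi> (real n)) else 0", simplified]) auto
  have dec: "AE x in M. u (Suc N) x \<le> u N x" for N
    unfolding u_def by (intro AE_I2 sum_mono) auto
  have "(\<integral>\<^sup>+ x. u 0 x \<partial>M) = (\<Sum>i\<in>{1..l}. (\<integral>\<^sup>+ x. ennreal (\<phi> (real (f i x))) \<partial>M))"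
    unfolding u_def
    by (simp, intro nn_integral_sum fm[where g = "\<lambda>n. ennreal (\<phi> (real n))", simplified]) auto
  also have "\<dots> < \<infinity>" using f_int by (simp add: ennreal_sum_less_top)
  finally have u0: "(\<integral>\<^sup>+ x. u 0 x \<partial>M) < \<infinity>" .
  have inf0: "(INF N. u N x) = 0" for x
  proof -
    have "u (Suc (\<Sum>i\<in>{1..l}. f i x)) x = 0"
      unfolding u_def
    proof (intro sum.neutral ballI)
      fix i assume "i \<in> {1..l}"
      hence "f i x \<le> (\<Sum>i\<in>{1..l}. f i x)" by (intro member_le_sum) auto
      thus "(if Suc (\<Sum>i\<in>{1..l}. f i x) \<le> f i x then ennreal (\<phi> (real (f i x))) else 0) = 0" by simp
    qed
    hence "(INF N. u N x) \<le> 0" by (metis INF_lower UNIV_I)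
    thus ?thesis by simp
  qed
  have "(\<integral>\<^sup>+ x. (INF N. u N x) \<partial>M) = (INF N. integral\<^sup>N M (u N))"
    by (rule nn_integral_monotone_convergence_INF_AE'[OF dec um u0])
  hence "(INF N. integral\<^sup>N M (u N)) = 0" using inf0 by simp
  hence "(INF N. integral\<^sup>N M (u N)) < ennreal e" using e by simp
  then obtain N where "integral\<^sup>N M (u N) < ennreal e" by (auto simp: INF_less_iff)
  thus ?thesis unfolding u_def by (rule exI)
qed


lemma record_point:
  fixes \<phi> :: "real \<Rightarrow> real"
  assumes phi_cont: "continuous_on {0..} \<phi>"
    and phi_sublin: "sublinear \<phi>"
    and phi_mono: "mono_on {0..} \<phi>"
    and B: "B \<ge> 1" and e: "e > 0"
  shows "\<exists>T. B \<le> T \<and> \<phi> T / T \<le> e \<and> (\<forall>t\<ge>B. \<phi> T * min t T \<le> \<phi> t * T)"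
proof -
  have "\<forall>\<^sub>F t in at_top. norm (\<phi> t) \<le> e * norm t"
    using phi_sublin e unfolding sublinear_def by (auto dest: landau_o.smallD)
  moreover have "\<forall>\<^sub>F t in at_top. B \<le> (t::real)" by (rule eventually_ge_at_top)
  ultimately have "\<forall>\<^sub>F t in at_top. norm (\<phi> t) \<le> e * norm t \<and> B \<le> t"
    by (rule eventually_conj)
  then obtain N where N: "\<And>t. t \<ge> N \<Longrightarrow> norm (\<phi> t) \<le> e * norm t \<and> B \<le> t"
    unfolding eventually_at_top_linorder by blast
  have R: "norm (\<phi> (max N B)) \<le> e * norm (max N B)" "B \<le> max N B" using N[of "max N B"] by auto
  define R where "R = max N B"
  note R = R[folded R_def]
  have cont: "continuous_on {B..R} (\<lambda>s. \<phi> s / s)"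
    using B by (intro continuous_on_divide continuous_on_subset[OF phi_cont] continuous_on_id) auto
  obtain T where T: "T \<in> {B..R}" "\<forall>y\<in>{B..R}. \<phi> T / T \<le> \<phi> y / y"
    using continuous_attains_inf[OF compact_Icc _ cont] R(2) by auto
  have TR: "\<phi> T / T \<le> \<phi> R / R" using T R by auto
  have "\<phi> R / R \<le> e" using R B by (simp add: divide_le_eq abs_le_iff)
  hence "\<phi> T / T \<le> e" using TR by linarith
  moreover have "\<forall>t\<ge>B. \<phi> T * min t T \<le> \<phi> t * T"
  proof (intro allI impI)
    fix t assume t: "t \<ge> B"
    show "\<phi> T * min t T \<le> \<phi> t * T"
    proof (cases "t \<le> T")
      case True
      hence "\<phi> T / T \<le> \<phi> t / t" using T t by auto
      hence "\<phi> T * t \<le> \<phi> t * T" using t T B by (simp add: divide_le_eq le_divide_eq field_simps)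
      thus ?thesis using True by simp
    next
      case False
      have "\<phi> T \<le> \<phi> t" using phi_mono False T B by (auto intro: mono_onD)
      moreover have "T > 0" using T B by auto
      ultimately show ?thesis using False by simp
    qed
  qed
  ultimately show ?thesis using T by auto
qed

theorem lemma3p2:
  fixes \<phi> :: "real \<Rightarrow> real"
    and M :: "'a measure"
    and l :: nat
    and f :: "nat \<Rightarrow> 'a \<Rightarrow> nat"
  assumes phi_nonneg: "\<And>t. t \<ge> 0 \<Longrightarrow> \<phi> t \<ge> 0"
    and phi_cont: "continuous_on {0..} \<phi>"
    and phi_sublin: "sublinear \<phi>"
    and phi_mono: "mono_on {0..} \<phi>"
    and l_ge: "l \<ge> 1"
    and prob: "prob_space M"
    and f_meas: "\<And>i. i \<in> {1..l} \<Longrightarrow> f i \<in> measurable M (count_space UNIV)"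
    and f_int: "\<And>i. i \<in> {1..l} \<Longrightarrow> (\<integral>\<^sup>+ x. ennreal (\<phi> (real (f i x))) \<partial>M) < \<infinity>"
  shows "\<exists>\<psi> :: real \<Rightarrow> real.
           (\<forall>t\<ge>0. \<psi> t \<ge> 0) \<and> (\<forall>t>0. \<psi> t > 0) \<and> \<psi> 0 = 0 \<and>
           (\<forall>s\<ge>0. \<forall>t\<ge>0. \<psi> (s + t) \<le> \<psi> s + \<psi> t) \<and>
           mono_on {0..} \<psi> \<and>
           mono_on {0<..} (\<lambda>t. t / \<psi> t) \<and>
           (\<exists>x :: nat \<Rightarrow> real. strict_mono x \<and> (\<forall>k. x k \<ge> 0) \<and>
              filterlim x at_top sequentially \<and>
              (\<lambda>k. \<phi> (x k)) \<in> o[sequentially](\<lambda>k. \<psi> (x k))) \<and>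
           (\<forall>i\<in>{1..l}. (\<integral>\<^sup>+ x. ennreal (\<psi> (real (f i x))) \<partial>M) < \<infinity>)"
proof -
  define u where "u = (\<lambda>(N::nat) x. (\<Sum>i\<in>{1..l}. (if N \<le> f i x then ennreal (\<phi> (real (f i x))) else 0)))"
  have fm: "(\<lambda>x. g (f i x)) \<in> borel_measurable M" if "i \<in> {1..l}" for i and g :: "nat \<Rightarrow> ennreal"
    by (rule measurable_compose[OF f_meas[OF that]]) simp
  have um: "u N \<in> borel_measurable M" for N
    unfolding u_def by (intro borel_measurable_sum fm[where g = "\<lambda>n. if N \<le> n then ennreal (\<phi> (real n)) else 0", simplified]) auto
  define NB where "NB = (\<lambda>k. SOME N. integral\<^sup>N M (u N) < ennreal (1 / (real (k+1) * 2^k)))"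
  have NB: "integral\<^sup>N M (u (NB k)) < ennreal (1 / (real (k+1) * 2^k))" for k
  proof -
    have "\<exists>N. integral\<^sup>N M (u N) < ennreal (1 / (real (k+1) * 2^k))"
      using tail_small[of l f M \<phi> "1 / (real (k+1) * 2^k)", OF f_meas f_int] unfolding u_def by auto
    thus ?thesis unfolding NB_def by (rule someI_ex)
  qed
  define Q where "Q = (\<lambda>B e T. B \<le> T \<and> \<phi> T / T \<le> e \<and> (\<forall>t\<ge>B. \<phi> T * min t T \<le> \<phi> t * T))"
  define Tch where "Tch = (\<lambda>B e. SOME T. Q B e T)"
  have Tch: "Q B e (Tch B e)" if "B \<ge> 1" "e > 0" for B e
  proof -
    have "\<exists>T. Q B e T" unfolding Q_def by (rule record_point[OF phi_cont phi_sublin phi_mono that])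
    thus ?thesis unfolding Tch_def by (rule someI_ex)
  qed
  define Bf where "Bf = (\<lambda>k (prev::real). max (prev + 1) (max 1 (real (NB k))))"
  define nxt where "nxt = (\<lambda>k prev. Tch (Bf k prev) (1 / (real (k+1) * 2^k * Bf k prev)))"
  define T where "T = rec_nat (nxt 0 0) (\<lambda>k prev. nxt (Suc k) prev)"
  have T0: "T 0 = nxt 0 0" and TS: "\<And>k. T (Suc k) = nxt (Suc k) (T k)" by (simp_all add: T_def)
  define P where "P = (\<lambda>k Tk. \<exists>B. 1 \<le> B \<and> real (NB k) \<le> B \<and> B \<le> Tk \<and>
      \<phi> Tk / Tk \<le> 1 / (real (k+1) * 2^k * B) \<and> (\<forall>t\<ge>B. \<phi> Tk * min t Tk \<le> \<phi> t * Tk))"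
  have gen: "P k (nxt k prev) \<and> prev + 1 \<le> nxt k prev" for k prev
  proof -
    have B1: "Bf k prev \<ge> 1" "real (NB k) \<le> Bf k prev" "prev + 1 \<le> Bf k prev" unfolding Bf_def by auto
    have "1 / (real (k+1) * 2^k * Bf k prev) > 0" using B1 by (intro divide_pos_pos mult_pos_pos) auto
    from Tch[OF B1(1) this] B1 show ?thesis unfolding P_def nxt_def Q_def by auto
  qed
  have key: "P k (T k)" for k by (cases k) (simp_all add: T0 TS gen)
  have Tinc: "T k + 1 \<le> T (Suc k)" for k by (simp add: TS gen)
  have T1: "T k \<ge> 1" for k using key[of k] unfolding P_def by auto
  have Tk_ge: "T k \<ge> real k" for k
  proof (induction k)
    case 0 then show ?case using T1[of 0] by simp
  next
    case (Suc k) then show ?case using Tinc[of k] by simp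
  qed
  define c where "c = (\<lambda>k. real (k+1) * \<phi> (T k) / T k + (1/2)^k / T k)"
  have phiT: "\<phi> (T k) \<ge> 0" for k using phi_nonneg T1[of k] by simp
  have c_pos: "c k > 0" for k unfolding c_def using phiT[of k] T1[of k]
    by (intro add_nonneg_pos divide_nonneg_pos divide_pos_pos mult_nonneg_nonneg) auto
  have c_le: "c k \<le> 2 * (1/2)^k" for k
  proof -
    obtain B where B: "1 \<le> B" "\<phi> (T k) / T k \<le> 1 / (real (k+1) * 2^k * B)"
      using key[of k] unfolding P_def by auto
    have "real (k+1) * \<phi> (T k) / T k \<le> real (k+1) * (1 / (real (k+1) * 2^k * B))"
      using B(2) by (simp add: mult_left_mono times_divide_eq_right[symmetric] del: times_divide_eq_right)
    also have "\<dots> = 1 / (2^k * B)" by simp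
    also have "\<dots> \<le> (1/2)^k" using B(1) by (simp add: field_simps power_divide)
    finally have a: "real (k+1) * \<phi> (T k) / T k \<le> (1/2)^k" .
    have b: "(1/2)^k / T k \<le> (1/2::real)^k" using T1[of k] by (simp add: divide_le_eq mult_le_cancel_left1 )
    show ?thesis using a b unfolding c_def by simp
  qed
  define \<psi> where "\<psi> = (\<lambda>t. \<Sum>k. c k * min t (T k))"
  have summ: "summable (\<lambda>k. c k * min t (T k))" for t
  proof (rule summable_comparison_test)
    show "summable (\<lambda>k. 2 * \<bar>t\<bar> * (1/2::real)^k)" by (intro summable_mult summable_geometric) simp
    show "\<exists>N. \<forall>n\<ge>N. norm (c n * min t (T n)) \<le> 2 * \<bar>t\<bar> * (1 / 2) ^ n"
    proof (intro exI allI impI)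
      fix n
      have "\<bar>min t (T n)\<bar> \<le> \<bar>t\<bar>" using T1[of n] by auto
      hence "c n * \<bar>min t (T n)\<bar> \<le> 2 * (1/2)^n * \<bar>t\<bar>"
        using c_le[of n] c_pos[of n] by (intro mult_mono) auto
      thus "norm (c n * min t (T n)) \<le> 2 * \<bar>t\<bar> * (1 / 2) ^ n"
        using c_pos[of n] by (simp add: abs_mult mult_ac)
    qed
  qed
  have term_nonneg: "0 \<le> c k * min t (T k)" if "t \<ge> 0" for k t
    using c_pos[of k] T1[of k] that by (intro mult_nonneg_nonneg) auto
  have psi_ge_term: "c k * min t (T k) \<le> \<psi> t" if "t \<ge> 0" for k t
  proof -
    have "(\<Sum>j\<in>{k}. c j * min t (T j)) \<le> \<psi> t" unfolding \<psi>_def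
      using that by (intro sum_le_suminf summ term_nonneg) auto
    thus ?thesis by simp
  qed
  have psi_nonneg: "\<forall>t\<ge>0. \<psi> t \<ge> 0"
    unfolding \<psi>_def by (auto intro!: suminf_nonneg summ term_nonneg)
  have psi_pos: "\<forall>t>0. \<psi> t > 0"
  proof (intro allI impI)
    fix t :: real assume t: "t > 0"
    have "0 < c 0 * min t (T 0)" using c_pos[of 0] T1[of 0] t by simp
    also have "\<dots> \<le> \<psi> t" using psi_ge_term t by simp
    finally show "\<psi> t > 0" .
  qed
  have m0: "min 0 (T k) = (0::real)" for k using T1[of k] by simp
  have psi0: "\<psi> 0 = 0" unfolding \<psi>_def by (simp add: m0)
  have subadd: "\<forall>s\<ge>0. \<forall>t\<ge>0. \<psi> (s + t) \<le> \<psi> s + \<psi> t"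
  proof (intro allI impI)
    fix s t :: real assume st: "s \<ge> 0" "t \<ge> 0"
    have "\<psi> s + \<psi> t = (\<Sum>k. c k * min s (T k) + c k * min t (T k))"
      unfolding \<psi>_def by (rule suminf_add[OF summ summ])
    moreover have "\<psi> (s + t) \<le> (\<Sum>k. c k * min s (T k) + c k * min t (T k))"
      unfolding \<psi>_def
    proof (rule suminf_le)
      fix k
      have "min (s + t) (T k) \<le> min s (T k) + min t (T k)" using st T1[of k] by auto
      hence "c k * min (s + t) (T k) \<le> c k * (min s (T k) + min t (T k))"
        using c_pos[of k] by (intro mult_left_mono) auto
      thus "c k * min (s + t) (T k) \<le> c k * min s (T k) + c k * min t (T k)" by (simp add: algebra_simps)
    qed (intro summ summable_add)+
    ultimately show "\<psi> (s + t) \<le> \<psi> s + \<psi> t" by simp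
  qed
  have psi_mono: "mono_on {0..} \<psi>"
  proof (rule mono_onI)
    fix s t :: real assume "s \<in> {0..}" "t \<in> {0..}" "s \<le> t"
    then show "\<psi> s \<le> \<psi> t" unfolding \<psi>_def
      using c_pos by (intro suminf_le summ mult_left_mono) (auto intro: less_imp_le)
  qed
  have ratio_mono: "mono_on {0<..} (\<lambda>t. t / \<psi> t)"
  proof (rule mono_onI)
    fix s t :: real assume st: "s \<in> {0<..}" "t \<in> {0<..}" "s \<le> t"
    have ps: "\<psi> s > 0" "\<psi> t > 0" using psi_pos st by auto
    have "s * \<psi> t = (\<Sum>k. s * (c k * min t (T k)))" unfolding \<psi>_def by (rule suminf_mult[OF summ, symmetric])
    also have "\<dots> \<le> (\<Sum>k. t * (c k * min s (T k)))"
    proof (rule suminf_le)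
      fix k
      have "s * min t (T k) \<le> t * min s (T k)" using st T1[of k]
        by (auto simp: min_def mult_left_mono mult_right_mono mult.commute)
      hence "c k * (s * min t (T k)) \<le> c k * (t * min s (T k))"
        using c_pos[of k] by (intro mult_left_mono) auto
      thus "s * (c k * min t (T k)) \<le> t * (c k * min s (T k))" by (simp add: mult_ac)
    qed (intro summable_mult summ)+
    also have "\<dots> = t * \<psi> s" unfolding \<psi>_def by (rule suminf_mult[OF summ])
    finally have "s * \<psi> t \<le> t * \<psi> s" .
    thus "s / \<psi> s \<le> t / \<psi> t" using ps by (simp add: divide_le_eq le_divide_eq field_simps)
  qed
  have seq: "strict_mono T \<and> (\<forall>k. T k \<ge> 0) \<and> filterlim T at_top sequentially \<and>
      (\<lambda>k. \<phi> (T k)) \<in> o[sequentially](\<lambda>k. \<psi> (T k))"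
  proof (intro conjI allI)
    show "strict_mono T" using Tinc by (intro strict_monoI_Suc) (smt (verit))
    show "T k \<ge> 0" for k using T1[of k] by simp
    show "filterlim T at_top sequentially"
      by (rule filterlim_at_top_mono[OF filterlim_real_sequentially]) (use Tk_ge in auto)
    show "(\<lambda>k. \<phi> (T k)) \<in> o[sequentially](\<lambda>k. \<psi> (T k))"
    proof (rule landau_o.smallI)
      fix e :: real assume e: "e > 0"
      have big: "real (k+1) * \<phi> (T k) \<le> \<psi> (T k)" for k
      proof -
        have "real (k+1) * \<phi> (T k) \<le> c k * T k" using T1[of k] unfolding c_def
          by (simp add: field_simps)
        also have "\<dots> = c k * min (T k) (T k)" by simp
        also have "\<dots> \<le> \<psi> (T k)" using T1[of k] by (intro psi_ge_term) simp
        finally show ?thesis .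
      qed
      show "\<forall>\<^sub>F k in sequentially. norm (\<phi> (T k)) \<le> e * norm (\<psi> (T k))"
      proof (rule eventually_sequentiallyI[of "nat \<lceil>1/e\<rceil>"])
        fix k assume k: "nat \<lceil>1/e\<rceil> \<le> k"
        have "1/e \<le> real k" using k by linarith
        hence "1 \<le> e * real (k+1)" using e by (simp add: field_simps)
        hence "\<phi> (T k) \<le> e * real (k+1) * \<phi> (T k)" using phiT[of k] by (simp add: mult_le_cancel_right1)
        also have "\<dots> \<le> e * \<psi> (T k)" using big[of k] e by (simp add: mult.assoc)
        finally show "norm (\<phi> (T k)) \<le> e * norm (\<psi> (T k))"
          using phiT[of k] psi_nonneg T1[of k] by simp
      qed
    qed
  qed
  have integ: "\<forall>i\<in>{1..l}. (\<integral>\<^sup>+ x. ennreal (\<psi> (real (f i x))) \<partial>M) < \<infinity>"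
  proof
    fix i assume i: "i \<in> {1..l}"
    have termb: "(\<integral>\<^sup>+ x. ennreal (c k * min (real (f i x)) (T k)) \<partial>M) \<le> ennreal (3 * (1/2)^k)" for k
    proof -
      obtain B where B: "1 \<le> B" "real (NB k) \<le> B" "B \<le> T k"
        "\<phi> (T k) / T k \<le> 1 / (real (k+1) * 2^k * B)" "\<forall>t\<ge>B. \<phi> (T k) * min t (T k) \<le> \<phi> t * T k"
        using key[of k] unfolding P_def by auto
      have pt: "ennreal (c k * min (real (f i x)) (T k)) \<le> ennreal (real (k+1)) * u (NB k) x + ennreal (2 * (1/2)^k)" for x
      proof -
        define n where "n = real (f i x)"
        have n0: "n \<ge> 0" unfolding n_def by simp
        have second: "(1/2)^k / T k * min n (T k) \<le> (1/2)^k"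
        proof -
          have "(1/2)^k / T k * min n (T k) \<le> (1/2)^k / T k * T k"
            using T1[of k] by (intro mult_left_mono) auto
          thus ?thesis using T1[of k] by simp
        qed
        have first: "real (k+1) * \<phi> (T k) / T k * min n (T k) \<le>
            real (k+1) * (if NB k \<le> f i x then \<phi> n else 0) + (1/2)^k"
        proof (cases "B \<le> n")
          case True
          have "\<phi> (T k) * min n (T k) \<le> \<phi> n * T k" using B(5) True by auto
          hence "\<phi> (T k) / T k * min n (T k) \<le> \<phi> n" using T1[of k] by (simp add: field_simps)
          hence A: "real (k+1) * (\<phi> (T k) / T k * min n (T k)) \<le> real (k+1) * \<phi> n" by (intro mult_left_mono) auto
          have NBk: "NB k \<le> f i x" using True B(2) unfolding n_def by linarith
          have eq: "real (k+1) * \<phi> (T k) / T k * min n (T k) = real (k+1) * (\<phi> (T k) / T k * min n (T k))"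
            by simp
          have pos: "(0::real) \<le> (1/2)^k" by simp
          show ?thesis unfolding if_P[OF NBk] using A eq pos by linarith
        next
          case False
          have "\<phi> (T k) / T k * min n (T k) \<le> 1 / (real (k+1) * 2^k * B) * B"
            using B(4) False n0 phiT[of k] T1[of k] by (intro mult_mono) auto
          also have "\<dots> = 1 / (real (k+1) * 2^k)" using B(1) by simp
          finally have "real (k+1) * (\<phi> (T k) / T k * min n (T k)) \<le> real (k+1) * (1 / (real (k+1) * 2^k))"
            by (intro mult_left_mono) auto
          also have "\<dots> = (1/2)^k" by (simp add: power_divide)
          finally have "real (k+1) * \<phi> (T k) / T k * min n (T k) \<le> (1/2)^k" by simp
          moreover have "0 \<le> real (k+1) * (if NB k \<le> f i x then \<phi> n else 0)" using phi_nonneg n0 by auto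
          ultimately show ?thesis by linarith
        qed
        have real_bd: "c k * min n (T k) \<le> real (k+1) * (if NB k \<le> f i x then \<phi> n else 0) + 2 * (1/2)^k"
          using first second unfolding c_def by (simp add: algebra_simps)
        have "ennreal (c k * min n (T k)) \<le> ennreal (real (k+1) * (if NB k \<le> f i x then \<phi> n else 0) + 2 * (1/2)^k)"
          by (rule ennreal_leI[OF real_bd])
        also have "\<dots> = ennreal (real (k+1)) * (if NB k \<le> f i x then ennreal (\<phi> n) else 0) + ennreal (2 * (1/2)^k)"
          using phi_nonneg[OF n0] by (simp add: ennreal_plus ennreal_mult)
        also have "\<dots> \<le> ennreal (real (k+1)) * u (NB k) x + ennreal (2 * (1/2)^k)"
        proof -
          have "(if NB k \<le> f i x then ennreal (\<phi> n) else 0) \<le> u (NB k) x"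
            unfolding u_def n_def
            using member_le_sum[of i "{1..l}" "\<lambda>i. (if NB k \<le> f i x then ennreal (\<phi> (real (f i x))) else 0)"] i
            by simp
          thus ?thesis by (intro add_mono mult_left_mono) auto
        qed
        finally show ?thesis unfolding n_def .
      qed
      have "(\<integral>\<^sup>+ x. ennreal (c k * min (real (f i x)) (T k)) \<partial>M) \<le>
          (\<integral>\<^sup>+ x. ennreal (real (k+1)) * u (NB k) x + ennreal (2 * (1/2)^k) \<partial>M)"
        by (intro nn_integral_mono pt)
      also have "\<dots> = ennreal (real (k+1)) * integral\<^sup>N M (u (NB k)) + ennreal (2 * (1/2)^k)"
        using um prob_space.emeasure_space_1[OF prob]
        by (simp add: nn_integral_add nn_integral_cmult)
      also have "\<dots> \<le> ennreal (real (k+1)) * ennreal (1 / (real (k+1) * 2^k)) + ennreal (2 * (1/2)^k)"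
        using NB[of k] by (intro add_mono mult_left_mono) auto
      also have "\<dots> = ennreal (3 * (1/2)^k)"
        by (simp add: ennreal_mult[symmetric] ennreal_plus[symmetric] power_divide del: ennreal_plus)
      finally show ?thesis .
    qed
    have "(\<integral>\<^sup>+ x. ennreal (\<psi> (real (f i x))) \<partial>M) = (\<integral>\<^sup>+ x. (\<Sum>k. ennreal (c k * min (real (f i x)) (T k))) \<partial>M)"
      unfolding \<psi>_def
      by (intro nn_integral_cong suminf_ennreal2[symmetric] summ term_nonneg) auto
    also have "\<dots> = (\<Sum>k. (\<integral>\<^sup>+ x. ennreal (c k * min (real (f i x)) (T k)) \<partial>M))"
      by (intro nn_integral_suminf fm[OF i, where g = "\<lambda>n. ennreal (c k * min (real n) (T k))" for k, simplified])
    also have "\<dots> \<le> (\<Sum>k. ennreal (3 * (1/2)^k))"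
      by (intro suminf_le termb summableI)
    also have "\<dots> = ennreal (\<Sum>k. 3 * (1/2::real)^k)"
      by (intro suminf_ennreal2 summable_mult summable_geometric) auto
    also have "\<dots> < \<infinity>" by simp
    finally show "(\<integral>\<^sup>+ x. ennreal (\<psi> (real (f i x))) \<partial>M) < \<infinity>" .
  qed
  show ?thesis
    by (intro exI[of _ \<psi>] conjI psi_nonneg psi_pos psi0 subadd psi_mono ratio_mono integ exI[of _ T] seq[THEN conjunct1])
      (use seq in auto)
qed

end
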